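(* Let $w,\mathrm{dim},d$ be positive integers and let the dataset be the full integer grid $S=X=\{(a_1,\dots,a_{\mathrm{dim}}) : a_i\in\mathbb{N},\ a_i\le w \text{ for all } i\}$, with $n=|S|$ points. Let $H$ be the class of binary decision trees of height at most $d$ on $X$ in which every internal node tests a feature dimension distinct from those tested by all of its ancestors. Then the disagreement coefficient $\theta$ of $H$ on $S$ satisfies $\theta=O(\ln^{d}(n))$ and $\theta=\Omega\big(c\,(\ln(n)-c')^{d-1}\big)$, where $c=\frac{2^{-\mathrm{dim}}}{d^{d-1}\,d!}$ and $c'=\ln(4)\,\mathrm{dim}$.
   Context: A decision tree classifies a point $x$ by routing it from the root: each internal node compares one coordinate $x_a$ with a threshold $t$ (going to one child if $x_a\ge t$ and to the other otherwise) and each leaf carries a label in $\{0,1\}$. For a finite dataset $S$ of $n$ points and $h,h'\in H$, $D_S(h,h')=\frac1n\sum_{x\in S}\mathbb{I}(h(x)\ne h'(x))$; the ball is $B_H(h,r)=\{h'\in H: D_S(h,h')\le r\}$; for $V\subseteq H$ the disagreement region is $\mathrm{DIS}_S(V)=\{x\in S:\exists h_1,h_2\in V,\ h_1(x)\neq h_2(x)\}$. The disagreement coefficient of $h$ is $\theta_h=\sup_{r>0}\frac{|\mathrm{DIS}_S(B_H(h,r))|}{rn}$ and that of $H$ is $\theta=\sup_{h\in H}\theta_h$. *)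

theory Defs
  imports Complex_Main "HOL-Library.Landau_Symbols"
begin

datatype dtree = Leaf bool | Node nat real dtree dtree

fun classify :: "dtree \<Rightarrow> nat list \<Rightarrow> bool" where
  "classify (Leaf b) x = b"
| "classify (Node a t l r) x = (if real (x ! a) \<ge> t then classify l x else classify r x)"

fun height :: "dtree \<Rightarrow> nat" where
  "height (Leaf b) = 0"
| "height (Node a t l r) = Suc (max (height l) (height r))"

fun valid_tree :: "nat \<Rightarrow> nat set \<Rightarrow> dtree \<Rightarrow> bool" where
  "valid_tree nf A (Leaf b) = True"
| "valid_tree nf A (Node a t l r) =
     (a < nf \<and> a \<notin> A \<and> valid_tree nf (insert a A) l \<and> valid_tree nf (insert a A) r)"

definition grid :: "nat \<Rightarrow> nat \<Rightarrow> nat list set" where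
  "grid nf w = {xs. length xs = nf \<and> (\<forall>i<nf. xs ! i \<le> w)}"

definition DT_class :: "nat \<Rightarrow> nat \<Rightarrow> (nat list \<Rightarrow> bool) set" where
  "DT_class nf d = {classify T | T. valid_tree nf {} T \<and> height T \<le> d}"

definition dist_S :: "'a set \<Rightarrow> ('a \<Rightarrow> bool) \<Rightarrow> ('a \<Rightarrow> bool) \<Rightarrow> real" where
  "dist_S S h h' = real (card {x\<in>S. h x \<noteq> h' x}) / real (card S)"

definition ball_H :: "('a \<Rightarrow> bool) set \<Rightarrow> 'a set \<Rightarrow> ('a \<Rightarrow> bool) \<Rightarrow> real \<Rightarrow> ('a \<Rightarrow> bool) set" where
  "ball_H H S h r = {h'\<in>H. dist_S S h h' \<le> r}"

definition DIS :: "'a set \<Rightarrow> ('a \<Rightarrow> bool) set \<Rightarrow> 'a set" where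
  "DIS S V = {x\<in>S. \<exists>h1\<in>V. \<exists>h2\<in>V. h1 x \<noteq> h2 x}"

definition dis_coeff_h :: "('a \<Rightarrow> bool) set \<Rightarrow> 'a set \<Rightarrow> ('a \<Rightarrow> bool) \<Rightarrow> real" where
  "dis_coeff_h H S h =
     (SUP r\<in>{0<..}. real (card (DIS S (ball_H H S h r))) / (r * real (card S)))"

definition dis_coeff :: "('a \<Rightarrow> bool) set \<Rightarrow> 'a set \<Rightarrow> real" where
  "dis_coeff H S = (SUP h\<in>H. dis_coeff_h H S h)"

end

theory Submission
  imports Defs
begin


definition box :: "nat \<Rightarrow> (nat \<Rightarrow> nat set) \<Rightarrow> nat list set" where
  "box nf I = {xs. length xs = nf \<and> (\<forall>i<nf. xs ! i \<in> I i)}"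

definition domi :: "bool \<Rightarrow> nat \<Rightarrow> nat \<Rightarrow> bool" where
  "domi b u v = (if b then v \<le> u else u \<le> v)"

definition ubox :: "nat \<Rightarrow> (nat \<Rightarrow> nat set) \<Rightarrow> (nat \<times> bool) list \<Rightarrow> nat list \<Rightarrow> nat list set" where
  "ubox nf I \<sigma> x = {y\<in>box nf I. \<forall>(a,b)\<in>set \<sigma>. domi b (y!a) (x!a)}"

definition Hs :: "nat \<Rightarrow> real" where
  "Hs w = (\<Sum>j\<in>{1..Suc w}. 1 / real j)"

lemma Hs_ge1: "Hs w \<ge> 1"
proof -
  have "(\<Sum>j\<in>{1..1}. 1 / real j) \<le> Hs w" unfolding Hs_def
    by (rule sum_mono2) auto
  thus ?thesis by simp
qed

lemma box_finite:
  assumes "\<forall>i. I i \<subseteq> {..w}"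
  shows "finite (box nf I)"
proof -
  have "box nf I \<subseteq> {xs. set xs \<subseteq> {..w} \<and> length xs = nf}"
    using assms unfolding box_def by (auto simp: in_set_conv_nth subset_iff)
  thus ?thesis by (rule finite_subset) (rule finite_lists_length_eq, simp)
qed

lemma count_lemma:
  assumes "\<forall>i. I i \<subseteq> {..w}" "distinct (map fst \<sigma>)" "\<forall>(a,b)\<in>set \<sigma>. a < nf" "m \<ge> 0"
  shows "real (card {x\<in>box nf I. real (card (ubox nf I \<sigma> x)) \<le> m}) \<le> m * Hs w ^ length \<sigma>"
  using assms
proof (induction \<sigma> arbitrary: I m)
  case Nil
  have u: "ubox nf I [] x = box nf I" for x by (simp add: ubox_def)
  show ?case
  proof (cases "real (card (box nf I)) \<le> m")
    case True
    have "card {x\<in>box nf I. real (card (ubox nf I [] x)) \<le> m} \<le> card (box nf I)"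
      by (rule card_mono[OF box_finite[OF Nil.prems(1)]]) auto
    then show ?thesis using True by simp
  next
    case False
    then show ?thesis using Nil.prems by (simp add: u)
  qed
next
  case (Cons ab \<sigma>)
  obtain a b where ab: "ab = (a,b)" by force
  have a_nf: "a < nf" using Cons.prems ab by auto
  have a_notin: "a \<notin> fst ` set \<sigma>" using Cons.prems ab by auto
  define Iv where "Iv v = I(a := {v})" for v
  define c where "c v = card {u\<in>I a. domi b u v}" for v
  define g where "g v x = card (ubox nf (Iv v) \<sigma> x)" for v x
  have finIa: "finite (I a)" using Cons.prems(1) finite_subset by blast
  have Iv_ok: "\<forall>i. Iv v i \<subseteq> {..w}" if "v \<in> I a" for v
    using Cons.prems(1) that unfolding Iv_def by auto
  have key: "card (ubox nf I (ab#\<sigma>) x) = c v * g v x" if v: "v \<in> I a" and x: "x \<in> box nf (Iv v)" for v x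
  proof -
    have xa: "x ! a = v" using x a_nf unfolding box_def Iv_def by auto
    have U: "ubox nf I (ab#\<sigma>) x = (\<Union>u\<in>{u\<in>I a. domi b u v}. ubox nf (Iv u) \<sigma> x)"
      using xa a_nf unfolding ubox_def box_def Iv_def ab
      by (auto split: if_splits)
    have same: "card (ubox nf (Iv u) \<sigma> x) = g v x" if u: "u \<in> I a" for u
    proof -
      have inj: "inj_on (\<lambda>y. y[a:=v]) (ubox nf (Iv u) \<sigma> x)"
      proof (rule inj_onI)
        fix y y' assume y: "y \<in> ubox nf (Iv u) \<sigma> x" and y': "y' \<in> ubox nf (Iv u) \<sigma> x"
          and eq: "y[a:=v] = y'[a:=v]"
        have "y ! a = u" "y' ! a = u" "length y = nf" "length y' = nf"
          using y y' a_nf unfolding ubox_def box_def Iv_def by auto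
        then show "y = y'" using eq
          by (metis list_update_id list_update_overwrite)
      qed
      have img: "(\<lambda>y. y[a:=v]) ` (ubox nf (Iv u) \<sigma> x) = ubox nf (Iv v) \<sigma> x"
      proof (intro equalityI subsetI)
        fix z assume "z \<in> (\<lambda>y. y[a:=v]) ` (ubox nf (Iv u) \<sigma> x)"
        then obtain y where y: "y \<in> ubox nf (Iv u) \<sigma> x" and z: "z = y[a:=v]" by auto
        have "\<forall>(a',b')\<in>set \<sigma>. a' \<noteq> a" using a_notin by force
        then show "z \<in> ubox nf (Iv v) \<sigma> x" using y z a_nf unfolding ubox_def box_def Iv_def
          by (auto simp: nth_list_update split: prod.splits)
      next
        fix z assume z: "z \<in> ubox nf (Iv v) \<sigma> x"
        have zl: "length z = nf" "z ! a = v" using z a_nf unfolding ubox_def box_def Iv_def by auto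
        have "\<forall>(a',b')\<in>set \<sigma>. a' \<noteq> a" using a_notin by force
        then have "z[a:=u] \<in> ubox nf (Iv u) \<sigma> x" using z zl a_nf unfolding ubox_def box_def Iv_def
          by (auto simp: nth_list_update split: prod.splits)
        moreover have "z = (z[a:=u])[a:=v]" using zl by (metis list_update_id list_update_overwrite)
        ultimately show "z \<in> (\<lambda>y. y[a:=v]) ` (ubox nf (Iv u) \<sigma> x)" by blast
      qed
      show ?thesis unfolding g_def using card_image[OF inj] img by simp
    qed
    have fin: "finite (ubox nf (Iv u) \<sigma> x)" if "u \<in> I a" for u
      using box_finite[OF Iv_ok[OF that]] unfolding ubox_def by auto
    have disj: "ubox nf (Iv u) \<sigma> x \<inter> ubox nf (Iv u') \<sigma> x = {}" if "u \<noteq> u'" for u u'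
      using that a_nf unfolding ubox_def box_def Iv_def by auto
    have "card (ubox nf I (ab#\<sigma>) x) = (\<Sum>u\<in>{u\<in>I a. domi b u v}. card (ubox nf (Iv u) \<sigma> x))"
      unfolding U by (rule card_UN_disjoint) (use finIa fin disj in auto)
    also have "\<dots> = (\<Sum>u\<in>{u\<in>I a. domi b u v}. g v x)" by (rule sum.cong) (auto simp: same)
    finally show ?thesis by (simp add: c_def)
  qed
  have c_pos: "c v \<ge> 1" if "v \<in> I a" for v
  proof -
    have "v \<in> {u\<in>I a. domi b u v}" using that by (simp add: domi_def)
    then have "{u\<in>I a. domi b u v} \<noteq> {}" by blast
    then show ?thesis unfolding c_def using finIa by (simp add: Suc_leI card_gt_0_iff)
  qed
  have c_le: "c v \<le> Suc w" for v
  proof -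
    have "c v \<le> card (I a)" unfolding c_def by (rule card_mono[OF finIa]) auto
    also have "\<dots> \<le> card {..w}" by (rule card_mono) (use Cons.prems(1) in auto)
    finally show ?thesis by simp
  qed
  have c_inj: "inj_on c (I a)"
  proof (rule inj_onI, rule ccontr)
    fix v v' assume v: "v \<in> I a" and v': "v' \<in> I a" and eq: "c v = c v'" and ne: "v \<noteq> v'"
    have strict: "c q < c p" if "p \<in> I a" "q \<in> I a" "domi b q p" "q \<noteq> p" for p q
    proof -
      have s1: "{u\<in>I a. domi b u q} \<subseteq> {u\<in>I a. domi b u p}"
        using that unfolding domi_def by (auto split: if_splits)
      have s2: "p \<in> {u\<in>I a. domi b u p}" "p \<notin> {u\<in>I a. domi b u q}"
        using that unfolding domi_def by (auto split: if_splits)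
      have "{u\<in>I a. domi b u q} \<subset> {u\<in>I a. domi b u p}"
        using s1 s2 by blast
      then show ?thesis unfolding c_def by (rule psubset_card_mono[OF finite_subset[OF _ finIa], rotated]) auto
    qed
    have "domi b v' v \<or> domi b v v'" unfolding domi_def by auto
    then show False using strict[OF v v'] strict[OF v' v] eq ne by force
  qed
  have sumc: "(\<Sum>v\<in>I a. 1 / real (c v)) \<le> Hs w"
  proof -
    have "(\<Sum>v\<in>I a. 1 / real (c v)) = (\<Sum>j\<in>c ` I a. 1 / real j)"
      by (simp add: sum.reindex[OF c_inj])
    also have "\<dots> \<le> (\<Sum>j\<in>{1..Suc w}. 1 / real j)"
      by (rule sum_mono2) (use c_pos c_le in auto)
    finally show ?thesis by (simp add: Hs_def)
  qed
  define k where "k = length \<sigma>"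
  have IH: "real (card {x\<in>box nf (Iv v). real (g v x) \<le> m'}) \<le> m' * Hs w ^ k"
    if "v \<in> I a" "m' \<ge> 0" for v m'
    unfolding g_def k_def
    by (rule Cons.IH) (use Cons.prems Iv_ok[OF that(1)] that(2) in auto)
  have split: "{x\<in>box nf I. real (card (ubox nf I (ab#\<sigma>) x)) \<le> m}
      \<subseteq> (\<Union>v\<in>I a. {x\<in>box nf (Iv v). real (g v x) \<le> m / real (c v)})"
  proof
    fix x assume x: "x \<in> {x\<in>box nf I. real (card (ubox nf I (ab#\<sigma>) x)) \<le> m}"
    define v where "v = x ! a"
    have v: "v \<in> I a" using x a_nf unfolding box_def v_def by auto
    have xv: "x \<in> box nf (Iv v)" using x unfolding box_def Iv_def v_def by auto
    have "real (c v) * real (g v x) \<le> m" using x key[OF v xv] by simp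
    then have "real (g v x) \<le> m / real (c v)" using c_pos[OF v]
      by (simp add: field_simps)
    then show "x \<in> (\<Union>v\<in>I a. {x\<in>box nf (Iv v). real (g v x) \<le> m / real (c v)})"
      using v xv by blast
  qed
  have "real (card {x\<in>box nf I. real (card (ubox nf I (ab#\<sigma>) x)) \<le> m})
      \<le> real (card (\<Union>v\<in>I a. {x\<in>box nf (Iv v). real (g v x) \<le> m / real (c v)}))"
    by (rule of_nat_mono, rule card_mono[OF _ split])
       (use finIa box_finite[OF Iv_ok] in auto)
  also have "\<dots> \<le> real (\<Sum>v\<in>I a. card {x\<in>box nf (Iv v). real (g v x) \<le> m / real (c v)})"
    by (rule of_nat_mono, rule card_UN_le[OF finIa])
  also have "\<dots> \<le> (\<Sum>v\<in>I a. m / real (c v) * Hs w ^ k)"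
    unfolding of_nat_sum
    by (rule sum_mono) (rule IH, auto simp: Cons.prems(4))
  also have "\<dots> = m * Hs w ^ k * (\<Sum>v\<in>I a. 1 / real (c v))"
    by (simp add: sum_distrib_left field_simps)
  also have "\<dots> \<le> m * Hs w ^ k * Hs w"
    by (rule mult_left_mono[OF sumc]) (use Cons.prems(4) Hs_ge1[of w] in \<open>auto intro!: mult_nonneg_nonneg zero_le_power\<close>)
  finally show ?case by (simp add: k_def ab algebra_simps)
qed



fun path :: "dtree \<Rightarrow> nat list \<Rightarrow> (nat \<times> real \<times> bool) list" where
  "path (Leaf b) x = []"
| "path (Node a t l r) x = (if t \<le> real (x!a) then (a,t,True) # path l x else (a,t,False) # path r x)"

definition sat :: "(nat \<times> real \<times> bool) list \<Rightarrow> nat list \<Rightarrow> bool" where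
  "sat p y = (\<forall>(a,t,b)\<in>set p. (t \<le> real (y!a)) = b)"

fun paths :: "dtree \<Rightarrow> (nat \<times> real \<times> bool) list set" where
  "paths (Leaf b) = {[]}"
| "paths (Node a t l r) = Cons (a,t,True) ` paths l \<union> Cons (a,t,False) ` paths r"

definition shp :: "(nat \<times> real \<times> bool) list \<Rightarrow> (nat \<times> bool) list" where
  "shp p = map (\<lambda>(a,t,b). (a,b)) p"

definition Ip :: "nat \<Rightarrow> (nat \<times> real \<times> bool) list \<Rightarrow> nat \<Rightarrow> nat set" where
  "Ip w p i = {v. v \<le> w \<and> (\<forall>(a,t,b)\<in>set p. a = i \<longrightarrow> (t \<le> real v) = b)}"

definition Shapes :: "nat \<Rightarrow> nat \<Rightarrow> (nat \<times> bool) list set" where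
  "Shapes nf d = {\<sigma>. set \<sigma> \<subseteq> {..<nf} \<times> UNIV \<and> length \<sigma> \<le> d \<and> distinct (map fst \<sigma>)}"

lemma sat_path: "sat (path T x) x"
  by (induction T) (auto simp: sat_def)

lemma path_classify: "sat (path T x) y \<Longrightarrow> classify T y = classify T x"
  by (induction T) (auto simp: sat_def split: if_splits)

lemma path_valid0: "valid_tree nf A T \<Longrightarrow>
   distinct (map fst (path T x)) \<and> (\<forall>q\<in>set (path T x). fst q < nf \<and> fst q \<notin> A)"
proof (induction T arbitrary: A)
  case (Leaf b) then show ?case by simp
next
  case (Node a t l r)
  then have v: "a<nf" "a\<notin>A" "valid_tree nf (insert a A) l" "valid_tree nf (insert a A) r" by auto
  from Node.IH(1)[OF v(3)] Node.IH(2)[OF v(4)] v(1,2) show ?case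
    by (auto simp: image_iff)
qed

lemma path_valid: "valid_tree nf A T \<Longrightarrow>
   distinct (map fst (path T x)) \<and> (\<forall>(a,t,b)\<in>set (path T x). a < nf \<and> a \<notin> A)"
  using path_valid0[of nf A T x] by fastforce

lemma path_len: "length (path T x) \<le> height T"
  by (induction T) auto

lemma path_in_paths: "path T x \<in> paths T"
  by (induction T) auto

lemma paths_finite: "finite (paths T)"
  by (induction T) auto

lemma paths_card: "card (paths T) \<le> 2 ^ height T"
proof (induction T)
  case (Leaf b) then show ?case by simp
next
  case (Node a t l r)
  have "card (paths (Node a t l r)) \<le> card (Cons (a,t,True) ` paths l) + card (Cons (a,t,False) ` paths r)"
    by (simp add: card_Un_le)
  also have "\<dots> \<le> card (paths l) + card (paths r)"
    by (intro add_mono card_image_le paths_finite)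
  also have "\<dots> \<le> 2 ^ height l + 2 ^ height r" using Node by simp
  also have "\<dots> \<le> 2 ^ max (height l) (height r) + 2 ^ max (height l) (height r)"
    by (intro add_mono power_increasing) auto
  finally show ?case by simp
qed

lemma grid_eq: "grid nf w = {xs. set xs \<subseteq> {..w} \<and> length xs = nf}"
  unfolding grid_def by (auto simp: in_set_conv_nth subset_iff)

lemma grid_finite: "finite (grid nf w)"
  unfolding grid_eq by (rule finite_lists_length_eq) simp

lemma grid_card: "card (grid nf w) = Suc w ^ nf"
  unfolding grid_eq by (simp add: card_lists_length_eq)

lemma Shapes_finite: "finite (Shapes nf d)"
proof -
  have "Shapes nf d \<subseteq> {xs. set xs \<subseteq> {..<nf} \<times> UNIV \<and> length xs \<le> d}"
    unfolding Shapes_def by auto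
  thus ?thesis by (rule finite_subset) (rule finite_lists_length_le, simp)
qed

lemma sat_box:
  assumes "\<forall>(a,t,b)\<in>set p. a < nf"
  shows "{y\<in>grid nf w. sat p y} = box nf (Ip w p)"
  using assms unfolding grid_def box_def Ip_def sat_def by fastforce

lemma ubox_sub:
  assumes "sat p' x"
  shows "ubox nf I (shp p') x \<subseteq> {y\<in>box nf I. sat p' y}"
proof
  fix y assume y: "y \<in> ubox nf I (shp p') x"
  have "(t \<le> real (y!a)) = b" if "(a,t,b) \<in> set p'" for a t b
  proof -
    have "(a,b) \<in> set (shp p')" using that unfolding shp_def by force
    then have d: "domi b (y!a) (x!a)" using y unfolding ubox_def by auto
    have "(t \<le> real (x!a)) = b" using assms that unfolding sat_def by auto
    then show ?thesis using d unfolding domi_def by (auto split: if_splits)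
  qed
  then show "y \<in> {y\<in>box nf I. sat p' y}" using y unfolding ubox_def sat_def by auto
qed

lemma upper_card:
  assumes h: "h \<in> DT_class nf d" and r: "r > 0"
  shows "real (card (DIS (grid nf w) (ball_H (DT_class nf d) (grid nf w) h r)))
     \<le> 2 ^ d * real (card (Shapes nf d)) * (r * real (card (grid nf w))) * Hs w ^ d"
proof -
  define S where "S = grid nf w"
  define n where "n = real (card S)"
  define H where "H = DT_class nf d"
  obtain T where T: "valid_tree nf {} T" "height T \<le> d" "h = classify T"
    using h unfolding DT_class_def by auto
  define R where "R p \<sigma> = {x\<in>box nf (Ip w p). real (card (ubox nf (Ip w p) \<sigma> x)) \<le> r * n}" for p \<sigma>
  have Ipw: "\<forall>i. Ip w p i \<subseteq> {..w}" for p unfolding Ip_def by auto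
  have sub: "DIS S (ball_H H S h r) \<subseteq> (\<Union>p\<in>paths T. \<Union>\<sigma>\<in>Shapes nf d. R p \<sigma>)"
  proof
    fix x assume x: "x \<in> DIS S (ball_H H S h r)"
    have xS: "x \<in> S" using x unfolding DIS_def by auto
    have hb: "h \<in> ball_H H S h r" using h r unfolding ball_H_def dist_S_def H_def by auto
    obtain h' where h': "h' \<in> ball_H H S h r" "h' x \<noteq> h x"
      using x hb unfolding DIS_def by blast
    obtain T' where T': "valid_tree nf {} T'" "height T' \<le> d" "h' = classify T'"
      using h' unfolding ball_H_def H_def DT_class_def by auto
    have dd: "real (card {y\<in>S. h y \<noteq> h' y}) \<le> r * n"
      using h' unfolding ball_H_def dist_S_def n_def
      using grid_card[of nf w] by (simp add: S_def field_simps)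
    define p where "p = path T x"
    define p' where "p' = path T' x"
    have pv: "\<forall>(a,t,b)\<in>set p. a < nf" using path_valid[OF T(1)] p_def by fastforce
    have pv': "distinct (map fst p')" "\<forall>(a,t,b)\<in>set p'. a < nf"
      using path_valid[OF T'(1), of x] p'_def by auto
    have Q: "{y\<in>box nf (Ip w p). sat p' y} \<subseteq> {y\<in>S. h y \<noteq> h' y}"
    proof
      fix y assume y: "y \<in> {y\<in>box nf (Ip w p). sat p' y}"
      then have yS: "y \<in> S" and sp: "sat p y" using sat_box[OF pv] unfolding S_def by blast+
      have "h y = h x" using path_classify[OF sp[unfolded p_def]] T(3) by simp
      moreover have "h' y = h' x" using path_classify[of T' x y] y T'(3) p'_def by simp
      ultimately show "y \<in> {y\<in>S. h y \<noteq> h' y}" using yS h'(2) by simp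
    qed
    have sb: "ubox nf (Ip w p) (shp p') x \<subseteq> {y\<in>S. h y \<noteq> h' y}"
      using ubox_sub[OF sat_path[of T' x, folded p'_def]] Q by blast
    have "card (ubox nf (Ip w p) (shp p') x) \<le> card {y\<in>S. h y \<noteq> h' y}"
      by (rule card_mono[OF _ sb]) (use grid_finite in \<open>auto simp: S_def\<close>)
    then have c: "real (card (ubox nf (Ip w p) (shp p') x)) \<le> r * n" using dd by linarith
    have xb: "x \<in> box nf (Ip w p)" using sat_box[OF pv] xS sat_path[of T x] unfolding S_def p_def by blast
    have shpS: "shp p' \<in> Shapes nf d"
      using pv' path_len[of T' x] T'(2) unfolding Shapes_def shp_def p'_def
      by (auto simp: case_prod_beta comp_def)
    have "x \<in> R p (shp p')" using xb c unfolding R_def by auto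
    then show "x \<in> (\<Union>p\<in>paths T. \<Union>\<sigma>\<in>Shapes nf d. R p \<sigma>)"
      using shpS path_in_paths[of T x] p_def by blast
  qed
  have Rb: "real (card (R p \<sigma>)) \<le> r * n * Hs w ^ d" if "\<sigma> \<in> Shapes nf d" for p \<sigma>
  proof -
    have "real (card (R p \<sigma>)) \<le> r * n * Hs w ^ length \<sigma>"
      unfolding R_def
      by (rule count_lemma[OF Ipw]) (use that r in \<open>auto simp: Shapes_def n_def\<close>)
    also have "\<dots> \<le> r * n * Hs w ^ d"
      by (rule mult_left_mono, rule power_increasing) (use that Hs_ge1 r in \<open>auto simp: Shapes_def n_def\<close>)
    finally show ?thesis .
  qed
  have finR: "finite (R p \<sigma>)" for p \<sigma> unfolding R_def using box_finite[OF Ipw] by auto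
  have "real (card (DIS S (ball_H H S h r))) \<le> real (card (\<Union>p\<in>paths T. \<Union>\<sigma>\<in>Shapes nf d. R p \<sigma>))"
    by (rule of_nat_mono, rule card_mono[OF _ sub]) (use paths_finite Shapes_finite finR in auto)
  also have "\<dots> \<le> (\<Sum>p\<in>paths T. real (card (\<Union>\<sigma>\<in>Shapes nf d. R p \<sigma>)))"
    unfolding of_nat_sum[symmetric] by (rule of_nat_mono, rule card_UN_le[OF paths_finite])
  also have "\<dots> \<le> (\<Sum>p\<in>paths T. (\<Sum>\<sigma>\<in>Shapes nf d. real (card (R p \<sigma>))))"
    unfolding of_nat_sum[symmetric] by (rule of_nat_mono, rule sum_mono, rule card_UN_le[OF Shapes_finite])
  also have "\<dots> \<le> (\<Sum>p\<in>paths T. (\<Sum>\<sigma>\<in>Shapes nf d. r * n * Hs w ^ d))"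
    by (intro sum_mono Rb)
  also have "\<dots> = real (card (paths T)) * real (card (Shapes nf d)) * (r * n * Hs w ^ d)"
    by simp
  also have "\<dots> \<le> 2 ^ d * real (card (Shapes nf d)) * (r * n * Hs w ^ d)"
  proof -
    have "card (paths T) \<le> 2 ^ d"
      using paths_card[of T] power_increasing[OF T(2), of "2::nat"] by linarith
    then have "real (card (paths T)) \<le> real (2 ^ d)" by (rule of_nat_mono)
    then have "real (card (paths T)) \<le> 2 ^ d" by simp
    then show ?thesis
      by (intro mult_right_mono) (use r Hs_ge1[of w] in \<open>auto simp: n_def intro!: mult_nonneg_nonneg zero_le_power\<close>)
  qed
  finally show ?thesis by (simp add: S_def H_def n_def mult.assoc)
qed



definition Gs :: "nat \<Rightarrow> nat \<Rightarrow> nat \<Rightarrow> nat list set" where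
  "Gs M k T = {ms. length ms = k \<and> set ms \<subseteq> {1..M} \<and> (\<Prod>j<k. ms!j) \<le> T}"

lemma Gs_finite: "finite (Gs M k T)"
proof -
  have "Gs M k T \<subseteq> {xs. set xs \<subseteq> {1..M} \<and> length xs = k}" unfolding Gs_def by auto
  thus ?thesis by (rule finite_subset) (rule finite_lists_length_eq, simp)
qed

lemma sum_choose_lt: "(\<Sum>i<E. i choose k) = E choose Suc k"
proof (cases E)
  case 0 then show ?thesis by simp
next
  case (Suc n) then show ?thesis using sum_choose_upper[of k n] by (simp add: lessThan_Suc_atMost)
qed

lemma Gs_lower: "2^E \<le> M \<Longrightarrow> 2^E * (E choose k) \<le> card (Gs M (Suc k) (2^E)) * 2^k"
proof (induction k arbitrary: E)
  case 0
  have "(\<lambda>m. [m]) ` {1..(2::nat)^E} \<subseteq> Gs M (Suc 0) (2^E)"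
    using 0 unfolding Gs_def by auto
  then have "card ((\<lambda>m. [m]) ` {1..(2::nat)^E}) \<le> card (Gs M (Suc 0) (2^E))"
    by (rule card_mono[OF Gs_finite])
  moreover have "card ((\<lambda>m. [m]) ` {1..(2::nat)^E}) = 2^E"
    by (subst card_image) (auto simp: inj_on_def)
  ultimately show ?case by simp
next
  case (Suc k)
  define A where "A i = (\<lambda>(m,ms). m#ms) ` ({2^(E-1-i)..<2^(E-i)} \<times> Gs M (Suc k) (2^i))" for i
  have sub: "(\<Union>i<E. A i) \<subseteq> Gs M (Suc (Suc k)) (2^E)"
  proof
    fix x assume "x \<in> (\<Union>i<E. A i)"
    then obtain i m ms where i: "i < E" and m: "2^(E-1-i) \<le> m" "m < 2^(E-i)"
      and ms: "ms \<in> Gs M (Suc k) (2^i)" and x: "x = m#ms"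
      unfolding A_def by auto
    have "(1::nat) \<le> 2^(E-1-i)" by simp
    then have m1: "1 \<le> m" using m by linarith
    have "(2::nat)^(E-i) \<le> 2^E" by (rule power_increasing) auto
    then have mM: "m \<le> M" using m Suc.prems by linarith
    have p: "(\<Prod>j<Suc k. ms!j) \<le> 2^i" using ms unfolding Gs_def by auto
    have "(\<Prod>j<Suc (Suc k). x!j) = m * (\<Prod>j<Suc k. ms!j)"
      unfolding x by (simp only: prod.lessThan_Suc_shift) simp
    also have "\<dots> \<le> 2^(E-i) * 2^i" using p m by (intro mult_mono) auto
    also have "\<dots> = 2^E" using i by (simp add: power_add[symmetric])
    finally show "x \<in> Gs M (Suc (Suc k)) (2^E)"
      using ms m1 mM unfolding x Gs_def by auto
  qed
  have finA: "finite (A i)" for i unfolding A_def using Gs_finite by auto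
  have hdA: "2^(E-1-i) \<le> hd x \<and> hd x < 2^(E-i)" if "x \<in> A i" for x i
    using that unfolding A_def by auto
  have key: "A i \<inter> A j = {}" if "i < j" "j < E" for i j
  proof (rule ccontr)
    assume "A i \<inter> A j \<noteq> {}"
    then obtain x where "x \<in> A i" "x \<in> A j" by blast
    then have h1: "2^(E-1-i) \<le> hd x" and h2: "hd x < 2^(E-j)" using hdA by blast+
    have "(2::nat)^(E-j) \<le> 2^(E-1-i)" by (rule power_increasing) (use that in auto)
    then show False using h1 h2 by linarith
  qed
  have disj: "A i \<inter> A j = {}" if "i < E" "j < E" "i \<noteq> j" for i j
  proof (cases "i < j")
    case True then show ?thesis using key[OF True that(2)] by blast
  next
    case False then have "j < i" using that by auto
    then show ?thesis using key[OF _ that(1)] by blast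
  qed
  have cardA: "card (A i) = 2^(E-1-i) * card (Gs M (Suc k) (2^i))" if "i < E" for i
  proof -
    have "card (A i) = card ({(2::nat)^(E-1-i)..<2^(E-i)} \<times> Gs M (Suc k) (2^i))"
      unfolding A_def by (rule card_image) (auto simp: inj_on_def)
    also have "\<dots> = (2^(E-i) - 2^(E-1-i)) * card (Gs M (Suc k) (2^i))"
      by (simp add: card_cartesian_product)
    also have "(2::nat)^(E-i) - 2^(E-1-i) = 2^(E-1-i)"
    proof -
      have "E - i = Suc (E-1-i)" using that by simp
      then show ?thesis by simp
    qed
    finally show ?thesis .
  qed
  have IH: "2^i * (i choose k) \<le> card (Gs M (Suc k) (2^i)) * 2^k" if "i < E" for i
  proof (rule Suc.IH)
    have "(2::nat)^i \<le> 2^E" by (rule power_increasing) (use that in auto)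
    then show "2^i \<le> M" using Suc.prems by linarith
  qed
  have "(2::nat)^E * (E choose Suc k) = (\<Sum>i<E. 2^E * (i choose k))"
    by (simp only: sum_distrib_left[symmetric] sum_choose_lt)
  also have "\<dots> \<le> (\<Sum>i<E. 2^(E-1-i) * card (Gs M (Suc k) (2^i)) * 2^k * 2)"
  proof (rule sum_mono)
    fix i assume "i \<in> {..<E}"
    then have i: "i < E" by simp
    define x where "x = E-1-i"
    have eE: "E = Suc (x + i)" using i unfolding x_def by simp
    have e: "(2::nat)^E = 2^(E-1-i) * 2 * 2^i"
      unfolding x_def[symmetric] by (subst eE) (simp add: power_add)
    have "2^E * (i choose k) = 2^(E-1-i) * 2 * (2^i * (i choose k))" by (simp add: e)
    also have "\<dots> \<le> 2^(E-1-i) * 2 * (card (Gs M (Suc k) (2^i)) * 2^k)"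
      using IH[OF i] by (intro mult_left_mono) auto
    finally show "2^E * (i choose k) \<le> 2^(E-1-i) * card (Gs M (Suc k) (2^i)) * 2^k * 2"
      by (simp add: algebra_simps)
  qed
  also have "\<dots> = (\<Sum>i<E. card (A i)) * 2^(Suc k)"
  proof -
    have "(\<Sum>i<E. 2^(E-1-i) * card (Gs M (Suc k) (2^i)) * 2^k * 2) = (\<Sum>i<E. card (A i) * 2^(Suc k))"
      by (rule sum.cong) (auto simp: cardA algebra_simps)
    then show ?thesis by (simp add: sum_distrib_right)
  qed
  also have "(\<Sum>i<E. card (A i)) = card (\<Union>i<E. A i)"
    by (rule card_UN_disjoint[symmetric]) (use finA disj in auto)
  also have "card (\<Union>i<E. A i) * 2^(Suc k) \<le> card (Gs M (Suc (Suc k)) (2^E)) * 2^(Suc k)"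
    by (intro mult_right_mono card_mono[OF Gs_finite sub]) auto
  finally show ?case .
qed



fun ct :: "nat list \<Rightarrow> nat list \<Rightarrow> dtree" where
  "ct [] x = Leaf True"
| "ct (a#as) x = Node a (real (x!a)) (ct as x) (Leaf False)"

lemma ct_classify: "classify (ct as x) y = (\<forall>a\<in>set as. x!a \<le> y!a)"
  by (induction as) auto

lemma ct_height: "height (ct as x) = length as"
  by (induction as) auto

lemma ct_valid: "distinct as \<Longrightarrow> (\<forall>a\<in>set as. a < nf) \<Longrightarrow> set as \<inter> A = {} \<Longrightarrow> valid_tree nf A (ct as x)"
  by (induction as arbitrary: A) auto

lemma card_lists_fun:
  "(\<forall>j<k. finite (F j)) \<Longrightarrow> card {ys. length ys = k \<and> (\<forall>j<k. ys!j \<in> F j)} = (\<Prod>j<k. card (F j))"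
proof (induction k arbitrary: F)
  case 0
  have "{ys. length ys = 0 \<and> (\<forall>j<0. ys!j \<in> F j)} = {[]}" by auto
  then show ?case by simp
next
  case (Suc k)
  have eq: "{ys. length ys = Suc k \<and> (\<forall>j<Suc k. ys!j \<in> F j)}
     = (\<lambda>(y,ys). y#ys) ` (F 0 \<times> {ys. length ys = k \<and> (\<forall>j<k. ys!j \<in> F (Suc j))})"
  proof (intro equalityI subsetI)
    fix ys assume "ys \<in> {ys. length ys = Suc k \<and> (\<forall>j<Suc k. ys!j \<in> F j)}"
    then obtain y ys' where ys: "ys = y#ys'" "length ys' = k" and P: "\<forall>j<Suc k. ys!j \<in> F j"
      by (auto simp: length_Suc_conv)
    have "y \<in> F 0" using P ys by force
    moreover have "\<forall>j<k. ys'!j \<in> F (Suc j)" using P ys by force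
    ultimately show "ys \<in> (\<lambda>(y,ys). y#ys) ` (F 0 \<times> {ys. length ys = k \<and> (\<forall>j<k. ys!j \<in> F (Suc j))})"
      using ys by force
  next
    fix ys assume "ys \<in> (\<lambda>(y,ys). y#ys) ` (F 0 \<times> {ys. length ys = k \<and> (\<forall>j<k. ys!j \<in> F (Suc j))})"
    then obtain y ys' where ys: "ys = y#ys'" "length ys' = k" "y \<in> F 0" "\<forall>j<k. ys'!j \<in> F (Suc j)"
      by auto
    have "\<forall>j<Suc k. ys!j \<in> F j"
    proof (intro allI impI)
      fix j assume "j < Suc k"
      then show "ys!j \<in> F j" using ys by (cases j) auto
    qed
    then show "ys \<in> {ys. length ys = Suc k \<and> (\<forall>j<Suc k. ys!j \<in> F j)}" using ys by simp
  qed
  have "card {ys. length ys = Suc k \<and> (\<forall>j<Suc k. ys!j \<in> F j)}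
      = card (F 0 \<times> {ys. length ys = k \<and> (\<forall>j<k. ys!j \<in> F (Suc j))})"
    unfolding eq by (rule card_image) (auto simp: inj_on_def)
  also have "\<dots> = card (F 0) * (\<Prod>j<k. card (F (Suc j)))"
    using Suc.IH[of "\<lambda>j. F (Suc j)"] Suc.prems by (simp add: card_cartesian_product)
  also have "\<dots> = (\<Prod>j<Suc k. card (F j))"
    by (simp only: prod.lessThan_Suc_shift)
  finally show ?case .
qed

lemma h0_in: "classify (Leaf False) \<in> DT_class nf d"
  unfolding DT_class_def by force

lemma ratio_le:
  assumes "h \<in> DT_class nf d" "r > 0"
  shows "real (card (DIS (grid nf w) (ball_H (DT_class nf d) (grid nf w) h r))) / (r * real (card (grid nf w)))
     \<le> 2 ^ d * real (card (Shapes nf d)) * Hs w ^ d"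
proof -
  have n: "real (card (grid nf w)) > 0" using grid_card[of nf w] by simp
  show ?thesis using upper_card[OF assms, of w] n assms(2)
    by (simp add: divide_le_eq field_simps)
qed

lemma bdd_ratio:
  assumes "h \<in> DT_class nf d"
  shows "bdd_above ((\<lambda>r. real (card (DIS (grid nf w) (ball_H (DT_class nf d) (grid nf w) h r))) / (r * real (card (grid nf w)))) ` {0<..})"
  using ratio_le[OF assms] by (intro bdd_aboveI2[where M = "2 ^ d * real (card (Shapes nf d)) * Hs w ^ d"]) auto

lemma coeff_h_le:
  assumes "h \<in> DT_class nf d"
  shows "dis_coeff_h (DT_class nf d) (grid nf w) h \<le> 2 ^ d * real (card (Shapes nf d)) * Hs w ^ d"
  unfolding dis_coeff_h_def
  by (rule cSUP_least) (use ratio_le[OF assms] in auto)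

lemma coeff_le:
  "dis_coeff (DT_class nf d) (grid nf w) \<le> 2 ^ d * real (card (Shapes nf d)) * Hs w ^ d"
proof -
  have ne: "DT_class nf d \<noteq> {}" using h0_in[of nf d] by blast
  show ?thesis unfolding dis_coeff_def
    by (rule cSUP_least[OF ne]) (rule coeff_h_le)
qed

lemma coeff_ge:
  "dis_coeff_h (DT_class nf d) (grid nf w) (classify (Leaf False)) \<le> dis_coeff (DT_class nf d) (grid nf w)"
  unfolding dis_coeff_def
  by (rule cSUP_upper[OF h0_in]) (use coeff_h_le in \<open>auto intro!: bdd_aboveI2\<close>)

lemma lower_ratio:
  assumes d: "d > 0" "d \<le> nf" and E: "2^E \<le> Suc w"
  shows "real (E choose (d-1)) / 2^(d-1) \<le> dis_coeff_h (DT_class nf d) (grid nf w) (classify (Leaf False))"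
proof -
  define S where "S = grid nf w"
  define H where "H = DT_class nf d"
  define h0 where "h0 = classify (Leaf False)"
  define T where "T = (2::nat)^E"
  define n where "n = real (card S)"
  define r0 where "r0 = real T * real (Suc w ^ (nf-d)) / n"
  have n_eq: "n = real (Suc w ^ nf)" unfolding n_def S_def grid_card by simp
  have npos: "n > 0" unfolding n_eq by simp
  have r0pos: "r0 > 0" unfolding r0_def T_def using npos by simp
  define \<Phi> where "\<Phi> = (\<lambda>(ms, zs). map (\<lambda>m. Suc w - m) ms @ (zs :: nat list))"
  define G where "G = Gs (Suc w) d T"
  have h0b: "h0 \<in> ball_H H S h0 r0" using r0pos h0_in unfolding ball_H_def dist_S_def H_def h0_def by auto
  have img: "\<Phi> ` (G \<times> grid (nf-d) w) \<subseteq> DIS S (ball_H H S h0 r0)"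
  proof
    fix x assume "x \<in> \<Phi> ` (G \<times> grid (nf-d) w)"
    then obtain ms zs where ms: "ms \<in> G" and zs: "zs \<in> grid (nf-d) w" and x: "x = map (\<lambda>m. Suc w - m) ms @ zs"
      unfolding \<Phi>_def by auto
    have lms: "length ms = d" using ms unfolding G_def Gs_def by auto
    have msr: "ms!j \<in> {1..Suc w}" if "j < d" for j
    proof -
      have "ms!j \<in> set ms" using that lms by simp
      then show ?thesis using ms unfolding G_def Gs_def by blast
    qed
    have pms: "(\<Prod>j<d. ms!j) \<le> T" using ms unfolding G_def Gs_def by auto
    have xj: "x!j = Suc w - ms!j" if "j < d" for j
      using that lms unfolding x by (simp add: nth_append)
    have xS: "x \<in> S"
    proof -
      have "set ms \<subseteq> {1..Suc w}" using ms unfolding G_def Gs_def by blast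
      then have "set (map (\<lambda>m. Suc w - m) ms) \<subseteq> {..w}" by force
      moreover have "set zs \<subseteq> {..w}" "length zs = nf - d" using zs unfolding grid_eq by auto
      ultimately show ?thesis unfolding S_def grid_eq x using lms d by auto
    qed
    define h' where "h' = classify (ct [0..<d] x)"
    have h'H: "h' \<in> H" unfolding h'_def H_def DT_class_def
      using ct_valid[of "[0..<d]" nf "{}" x] ct_height[of "[0..<d]" x] d by auto
    define L where "L = {ys. length ys = d \<and> (\<forall>j<d. ys!j \<in> {x!j..w})}"
    have Dsub: "{y\<in>S. h0 y \<noteq> h' y} \<subseteq> (\<lambda>(ys,zs). ys @ zs) ` (L \<times> grid (nf-d) w)"
    proof
      fix y assume y: "y \<in> {y\<in>S. h0 y \<noteq> h' y}"
      then have yS: "y \<in> grid nf w" and dom: "\<forall>a<d. x!a \<le> y!a"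
        unfolding S_def h0_def h'_def by (auto simp: ct_classify)
      have ly: "length y = nf" and yw: "\<forall>i<nf. y!i \<le> w" using yS unfolding grid_def by auto
      have "take d y \<in> L" unfolding L_def using ly yw dom d by auto
      moreover have "drop d y \<in> grid (nf-d) w" unfolding grid_def using ly yw by auto
      ultimately show "y \<in> (\<lambda>(ys,zs). ys @ zs) ` (L \<times> grid (nf-d) w)"
        by (intro image_eqI[where x = "(take d y, drop d y)"]) auto
    qed
    have cardL: "card L = (\<Prod>j<d. ms!j)"
    proof -
      have "card L = (\<Prod>j<d. card {x!j..w})" unfolding L_def by (rule card_lists_fun) auto
      also have "\<dots> = (\<Prod>j<d. ms!j)"
      proof (rule prod.cong)
        fix j assume "j \<in> {..<d}"
        then show "card {x!j..w} = ms!j" using xj[of j] msr[of j] by auto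
      qed simp
      finally show ?thesis .
    qed
    have "L \<subseteq> {xs. set xs \<subseteq> {..w} \<and> length xs = d}"
      unfolding L_def by (auto simp: in_set_conv_nth)
    then have finL: "finite L" by (rule finite_subset) (rule finite_lists_length_eq, simp)
    have "card {y\<in>S. h0 y \<noteq> h' y} \<le> card ((\<lambda>(ys,zs). ys @ zs) ` (L \<times> grid (nf-d) w))"
      by (rule card_mono[OF _ Dsub]) (use finL grid_finite in auto)
    also have "\<dots> \<le> card (L \<times> grid (nf-d) w)" by (rule card_image_le) (use finL grid_finite in auto)
    also have "\<dots> = (\<Prod>j<d. ms!j) * Suc w ^ (nf-d)" by (simp add: card_cartesian_product cardL grid_card)
    also have "\<dots> \<le> T * Suc w ^ (nf-d)" using pms by simp
    finally have cD: "card {y\<in>S. h0 y \<noteq> h' y} \<le> T * Suc w ^ (nf-d)" .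
    have "dist_S S h0 h' \<le> r0"
    proof -
      have "real (card {y\<in>S. h0 y \<noteq> h' y}) \<le> real T * real (Suc w ^ (nf-d))"
        using cD by (metis of_nat_le_iff of_nat_mult)
      then show ?thesis unfolding dist_S_def r0_def n_def[symmetric]
        using npos by (simp add: divide_right_mono)
    qed
    then have h'b: "h' \<in> ball_H H S h0 r0" using h'H unfolding ball_H_def by auto
    have "h0 x \<noteq> h' x" unfolding h0_def h'_def by (simp add: ct_classify)
    then show "x \<in> DIS S (ball_H H S h0 r0)" unfolding DIS_def using xS h0b h'b by blast
  qed
  have inj: "inj_on \<Phi> (G \<times> grid (nf-d) w)"
  proof (rule inj_onI)
    fix p q assume a0: "p \<in> G \<times> grid (nf-d) w" "q \<in> G \<times> grid (nf-d) w"
      and eq0: "\<Phi> p = \<Phi> q"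
    obtain ms zs where p: "p = (ms, zs)" by force
    obtain ms' zs' where q: "q = (ms', zs')" by force
    have a: "(ms, zs) \<in> G \<times> grid (nf-d) w" "(ms', zs') \<in> G \<times> grid (nf-d) w"
      and eq: "\<Phi> (ms, zs) = \<Phi> (ms', zs')" using a0 eq0 p q by auto
    have l: "length ms = d" "length ms' = d" using a unfolding G_def Gs_def by auto
    have s: "set ms \<subseteq> {1..Suc w}" "set ms' \<subseteq> {1..Suc w}" using a unfolding G_def Gs_def by auto
    from eq l have m: "map (\<lambda>m. Suc w - m) ms = map (\<lambda>m. Suc w - m) ms'" and z: "zs = zs'"
      unfolding \<Phi>_def by auto
    have "inj_on (\<lambda>m. Suc w - m) {1..Suc w}" by (auto simp: inj_on_def)
    then have "inj_on (\<lambda>m. Suc w - m) (set ms \<union> set ms')"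
      by (rule inj_on_subset) (use s in auto)
    then have "ms = ms'" using m by (simp add: inj_on_map_eq_map)
    then show "p = q" using z p q by simp
  qed
  have finD: "finite (DIS S (ball_H H S h0 r0))" unfolding DIS_def S_def using grid_finite by auto
  have "card G * Suc w ^ (nf-d) = card (\<Phi> ` (G \<times> grid (nf-d) w))"
    by (simp add: card_image[OF inj] card_cartesian_product grid_card)
  also have "\<dots> \<le> card (DIS S (ball_H H S h0 r0))" by (rule card_mono[OF finD img])
  finally have cG: "real (card G) * real (Suc w ^ (nf-d)) \<le> real (card (DIS S (ball_H H S h0 r0)))"
    by (metis of_nat_le_iff of_nat_mult)
  have rn: "r0 * n = real T * real (Suc w ^ (nf-d))" unfolding r0_def using npos by simp
  have "real (card G) / real T \<le> real (card (DIS S (ball_H H S h0 r0))) / (r0 * n)"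
    unfolding rn using cG by (simp add: T_def field_simps)
  moreover have "real (E choose (d-1)) / 2^(d-1) \<le> real (card G) / real T"
  proof -
    have "2^E * (E choose (d-1)) \<le> card G * 2^(d-1)"
      using Gs_lower[of E "Suc w" "d-1"] E d unfolding G_def T_def by simp
    then have "real (2^E * (E choose (d-1))) \<le> real (card G * 2^(d-1))" by (rule of_nat_mono)
    then show ?thesis unfolding T_def by (simp add: field_simps)
  qed
  moreover have "real (card (DIS S (ball_H H S h0 r0))) / (r0 * n) \<le> dis_coeff_h H S h0"
    unfolding dis_coeff_h_def n_def
    by (rule cSUP_upper) (use r0pos bdd_ratio[OF h0_in] in \<open>auto simp: H_def S_def h0_def\<close>)
  ultimately show ?thesis unfolding H_def S_def h0_def by linarith
qed



lemma Hs_le_ln: "Hs w \<le> 1 + ln (real (Suc w))"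
proof (induction w)
  case 0 then show ?case by (simp add: Hs_def)
next
  case (Suc w)
  have hs: "Hs (Suc w) = Hs w + 1 / real (Suc (Suc w))"
    unfolding Hs_def by (simp add: atLeastAtMostSuc_conv)
  have pos: "0 < real (Suc w) / real (Suc (Suc w))" by simp
  have "ln (real (Suc w) / real (Suc (Suc w))) \<le> real (Suc w) / real (Suc (Suc w)) - 1"
    by (rule ln_le_minus_one[OF pos])
  also have "\<dots> = - (1 / real (Suc (Suc w)))" by (simp add: field_simps)
  finally have "1 / real (Suc (Suc w)) \<le> ln (real (Suc (Suc w))) - ln (real (Suc w))"
    by (simp add: ln_div)
  then show ?case using hs Suc.IH by linarith
qed

lemma ln2_half: "ln (2::real) \<ge> 1/2"
proof -
  have "ln (1/2::real) \<le> 1/2 - 1" by (rule ln_le_minus_one) simp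
  then show ?thesis by (simp add: ln_div)
qed

lemma ln4: "ln (4::real) = 2 * ln 2"
proof -
  have "ln (4::real) = ln (2^2)" by simp
  also have "\<dots> = 2 * ln 2" by (subst ln_realpow) auto
  finally show ?thesis .
qed

lemma lnN: "ln (real (card (grid nf w))) = real nf * ln (real (Suc w))"
  unfolding grid_card by (simp add: ln_realpow)

theorem theorem1:
  fixes nf d :: nat
  assumes "nf > 0" and "d > 0" and "d \<le> nf"
  shows "(\<lambda>w. dis_coeff (DT_class nf d) (grid nf w))
           \<in> O(\<lambda>w. ln (real (card (grid nf w))) ^ d)
       \<and> (\<lambda>w. dis_coeff (DT_class nf d) (grid nf w))
           \<in> \<Omega>(\<lambda>w. ((1 / 2 ^ nf) / (real d ^ (d - 1) * fact d))
                      * (ln (real (card (grid nf w))) - ln 4 * real nf) ^ (d - 1))"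
proof
  define \<theta> where "\<theta> w = dis_coeff (DT_class nf d) (grid nf w)" for w
  define K where "K = real (card (Shapes nf d))"
  have th_nonneg: "\<theta> w \<ge> 0" for w
  proof -
    have "real (0 choose (d-1)) / 2^(d-1) \<le> \<theta> w"
      using lower_ratio[OF assms(2,3), of 0 w] coeff_ge[of nf d w] unfolding \<theta>_def by simp
    moreover have "real (0 choose (d-1)) / 2^(d-1) \<ge> (0::real)" by simp
    ultimately show ?thesis by linarith
  qed
  have K0: "K \<ge> 0" unfolding K_def by simp
  show "(\<lambda>w. dis_coeff (DT_class nf d) (grid nf w)) \<in> O(\<lambda>w. ln (real (card (grid nf w))) ^ d)"
  proof (rule bigoI[where c = "2^d * K * 2^d"])
    show "eventually (\<lambda>w. norm (dis_coeff (DT_class nf d) (grid nf w))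
          \<le> 2^d * K * 2^d * norm (ln (real (card (grid nf w))) ^ d)) at_top"
      using eventually_ge_at_top[of "7::nat"]
    proof eventually_elim
      case (elim w)
      define L where "L = ln (real (Suc w))"
      have "ln (8::real) \<le> L" unfolding L_def using elim by (subst ln_le_cancel_iff) auto
      moreover have "ln (8::real) = 3 * ln 2"
      proof -
        have "ln (8::real) = ln (2^3)" by simp
        also have "\<dots> = 3 * ln 2" by (subst ln_realpow) auto
        finally show ?thesis .
      qed
      ultimately have L1: "L \<ge> 1" using ln2_half by linarith
      have nf1: "real nf \<ge> 1" using assms(1) by simp
      have "1 + L \<le> 2 * (real nf * L)"
      proof -
        have "L \<le> real nf * L" using nf1 L1 by (simp add: mult_le_cancel_right1)
        then show ?thesis using L1 by linarith
      qed
      then have "(1 + L)^d \<le> (2 * (real nf * L))^d"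
        by (rule power_mono) (use L1 in linarith)
      moreover have "Hs w ^ d \<le> (1 + L)^d"
        by (rule power_mono) (use Hs_le_ln[of w] Hs_ge1[of w] L_def in auto)
      ultimately have hb: "Hs w ^ d \<le> 2^d * (real nf * L)^d" by (simp add: power_mult_distrib)
      have "\<theta> w \<le> 2^d * K * Hs w ^ d" using coeff_le[of nf d w] unfolding \<theta>_def K_def .
      also have "\<dots> \<le> 2^d * K * (2^d * (real nf * L)^d)"
        by (rule mult_left_mono[OF hb]) (use K0 in simp)
      finally have "\<theta> w \<le> 2^d * K * 2^d * (real nf * L)^d" by (simp add: mult.assoc)
      moreover have "norm (ln (real (card (grid nf w))) ^ d) = (real nf * L)^d"
        using L1 unfolding lnN L_def by simp
      moreover have "norm (\<theta> w) = \<theta> w" using th_nonneg[of w] by simp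
      ultimately show ?case unfolding \<theta>_def by simp
    qed
  qed
  define c0 :: real where "c0 = (1 / 2 ^ nf) / (real d ^ (d - 1) * fact d)"
  have c0pos: "c0 > 0" unfolding c0_def using assms by simp
  show "(\<lambda>w. dis_coeff (DT_class nf d) (grid nf w))
           \<in> \<Omega>(\<lambda>w. ((1 / 2 ^ nf) / (real d ^ (d - 1) * fact d))
                      * (ln (real (card (grid nf w))) - ln 4 * real nf) ^ (d - 1))"
    unfolding bigomega_iff_bigo c0_def[symmetric]
  proof (rule bigoI[where c = "c0 * (2 * real nf * real d)^(d-1)"])
    define W where "W = nat \<lceil>exp (real d + 2)\<rceil>"
    show "eventually (\<lambda>w. norm (c0 * (ln (real (card (grid nf w))) - ln 4 * real nf) ^ (d - 1))
          \<le> c0 * (2 * real nf * real d)^(d-1) * norm (dis_coeff (DT_class nf d) (grid nf w))) at_top"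
      using eventually_ge_at_top[of W]
    proof eventually_elim
      case (elim w)
      define L where "L = ln (real (Suc w))"
      have "exp (real d + 2) \<le> real W" unfolding W_def by (rule real_nat_ceiling_ge)
      also have "real W \<le> real (Suc w)" using elim by simp
      finally have ex: "exp (real d + 2) \<le> real (Suc w)" .
      have "ln (exp (real d + 2)) \<le> L" unfolding L_def
        by (subst ln_le_cancel_iff) (use ex in auto)
      then have Ld: "real d + 2 \<le> L" by simp
      obtain E where E: "2^E \<le> Suc w" "Suc w < 2^(E+1)"
        using ex_power_ivl1[of 2 "Suc w"] by auto
      have "real (Suc w) < real (2^(E+1))" using E(2) by (simp only: of_nat_less_iff)
      then have r2: "real (Suc w) < 2^(E+1)" by simp
      have "L < ln (2^(E+1))" unfolding L_def
        by (subst ln_less_cancel_iff) (use r2 in auto)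
      also have "\<dots> = real (E+1) * ln 2" by (subst ln_realpow) auto
      also have "\<dots> \<le> real (E+1)" using ln_2_less_1 by (simp add: mult_le_cancel_left1)
      finally have LE: "L < real E + 1" by simp
      define u where "u = L - ln 4"
      have u0: "u \<ge> real d" unfolding u_def using Ld ln4 ln_2_less_1 by linarith
      have uE: "u \<le> real E" unfolding u_def using LE ln4 ln2_half by linarith
      have dE: "d - 1 \<le> E" using u0 uE by linarith
      have th: "(u / (2 * real d))^(d-1) \<le> \<theta> w"
      proof -
        have "real (E choose (d-1)) / 2^(d-1) \<le> \<theta> w"
          using lower_ratio[OF assms(2,3) E(1)] coeff_ge[of nf d w] unfolding \<theta>_def by linarith
        moreover have "(u / (2 * real d))^(d-1) \<le> real (E choose (d-1)) / 2^(d-1)"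
        proof (cases "d = 1")
          case True then show ?thesis by simp
        next
          case False
          then have d2: "d \<ge> 2" using assms(2) by linarith
          have "u / (2 * real d) \<le> real E / (2 * real d)"
            by (rule divide_right_mono) (use uE assms(2) in auto)
          also have "\<dots> \<le> real E / (2 * real (d-1))"
            by (rule divide_left_mono) (use d2 in auto)
          also have "\<dots> = real E / real (d-1) / 2" by simp
          finally have "(u / (2 * real d))^(d-1) \<le> (real E / real (d-1) / 2)^(d-1)"
            by (rule power_mono) (use u0 assms(2) in auto)
          also have "\<dots> = (real E / real (d-1))^(d-1) / 2^(d-1)" by (simp add: power_divide)
          also have "\<dots> \<le> real (E choose (d-1)) / 2^(d-1)"
            by (rule divide_right_mono) (use binomial_ge_n_over_k_pow_k[OF dE] in auto)
          finally show ?thesis .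
        qed
        ultimately show ?thesis by linarith
      qed
      have eq: "ln (real (card (grid nf w))) - ln 4 * real nf = (2 * real nf * real d) * (u / (2 * real d))"
        unfolding lnN u_def L_def using assms(2) by (simp add: field_simps)
      have gnorm: "norm (c0 * (ln (real (card (grid nf w))) - ln 4 * real nf) ^ (d - 1))
          = c0 * (2 * real nf * real d)^(d-1) * (u / (2 * real d))^(d-1)"
      proof -
        have B0: "u / (2 * real d) \<ge> 0" using u0 by simp
        have nn: "0 \<le> c0 * ((2 * real nf * real d) * (u / (2 * real d)))^(d-1)"
          using c0pos B0 by (intro mult_nonneg_nonneg zero_le_power) auto
        have "norm (c0 * ((2 * real nf * real d) * (u / (2 * real d)))^(d-1))
           = c0 * ((2 * real nf * real d) * (u / (2 * real d)))^(d-1)"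
          using nn by (simp only: real_norm_def abs_of_nonneg)
        also have "\<dots> = c0 * (2 * real nf * real d)^(d-1) * (u / (2 * real d))^(d-1)"
          by (simp only: power_mult_distrib mult.assoc)
        finally show ?thesis unfolding eq .
      qed
      also have "\<dots> \<le> c0 * (2 * real nf * real d)^(d-1) * \<theta> w"
        by (rule mult_left_mono[OF th]) (use c0pos in simp)
      finally show ?case using th_nonneg[of w] unfolding \<theta>_def by simp
    qed
  qed
qed

end
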